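(* Let $G$ be a complete convex geometric graph and let $B$ be a blocker for $\mathcal{T}_{\leq 3}(G)$ that is not a star. Suppose $B$ is a caterpillar with a spine whose terminal edges $[a,a']$ and $[b',b]$ lie on the boundary of $\mathrm{conv}(G)$, where $a$ and $b$ are the endpoints of the spine (leaves of $B$) and $a'\neq b'$. Let $\alpha$ be the closed arc of the boundary of $\mathrm{conv}(G)$ with endpoints $a,b$ that contains $a'$ and $b'$, and let $\beta$ be the other closed arc with endpoints $a,b$. Then every leaf of $B$ lies on $\beta$.
   Context: A geometric graph is a graph whose vertices are points in the plane in general position (no three collinear) and whose edges are straight segments between pairs of vertices; $G$ is complete if all pairs of vertices are joined, and convex if its vertices are in convex position. $\mathrm{conv}(G)$ is the convex hull of $V(G)$. $\mathcal{T}_{\leq k}(G)$ denotes the family of all simple (non-crossing) spanning trees of $G$ of (graph) diameter at most $k$. A subgraph $B$ blocks a family $\mathcal{F}$ of subgraphs if it shares at least one edge with every member of $\mathcal{F}$; a blocker of $\mathcal{F}$ is a subgraph that blocks $\mathcal{F}$ and has the smallest possible number of edges among all subgraphs blocking $\mathcal{F}$. A star of $G$ is the set of all edges of $G$ emanating from a single vertex. A tree is a caterpillar if deleting all its leaves and their incident edges leaves a path (or empty graph); a spine is a longest path in the caterpillar. *)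

theory Defs
  imports Main
begin

text \<open>Combinatorial model of a complete convex geometric graph on n vertices:
  the vertices are 0,...,n-1, listed in the cyclic order in which they appear
  on the boundary of the convex hull. Two segments with four distinct endpoints
  cross iff their endpoints interleave in this cyclic order; segments sharing an
  endpoint never cross (general position).\<close>

definition cvx_vertices :: "nat \<Rightarrow> nat set" where
  "cvx_vertices n = {..<n}"

definition cvx_edges :: "nat \<Rightarrow> nat set set" where
  "cvx_edges n = {{u, v} | u v. u < n \<and> v < n \<and> u \<noteq> v}"

definition strictly_between :: "nat \<Rightarrow> nat \<Rightarrow> nat \<Rightarrow> bool" where
  "strictly_between a b x \<longleftrightarrow> min a b < x \<and> x < max a b"

definition crosses :: "nat set \<Rightarrow> nat set \<Rightarrow> bool" where
  "crosses e f \<longleftrightarrow> (\<exists>a b c d. e = {a, b} \<and> f = {c, d} \<and>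
      card {a, b, c, d} = 4 \<and>
      (strictly_between a b c \<noteq> strictly_between a b d))"

definition noncrossing :: "nat set set \<Rightarrow> bool" where
  "noncrossing T \<longleftrightarrow> (\<forall>e\<in>T. \<forall>f\<in>T. \<not> crosses e f)"

definition hull_edges :: "nat \<Rightarrow> nat set set" where
  "hull_edges n = {{i, Suc i mod n} | i. i < n \<and> Suc i mod n \<noteq> i}"

definition cyc_arc :: "nat \<Rightarrow> nat \<Rightarrow> nat \<Rightarrow> nat set" where
  "cyc_arc n a b = {(a + k) mod n | k. k \<le> (b + n - a) mod n}"

definition walk :: "nat set set \<Rightarrow> nat list \<Rightarrow> bool" where
  "walk T xs \<longleftrightarrow> xs \<noteq> [] \<and> (\<forall>i. Suc i < length xs \<longrightarrow> {xs ! i, xs ! Suc i} \<in> T)"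

definition gpath :: "nat set set \<Rightarrow> nat list \<Rightarrow> bool" where
  "gpath T xs \<longleftrightarrow> walk T xs \<and> distinct xs"

definition has_cycle :: "nat set set \<Rightarrow> bool" where
  "has_cycle T \<longleftrightarrow> (\<exists>xs. gpath T xs \<and> length xs \<ge> 3 \<and> {last xs, hd xs} \<in> T)"

definition connected_on :: "nat set \<Rightarrow> nat set set \<Rightarrow> bool" where
  "connected_on V T \<longleftrightarrow> (\<forall>u\<in>V. \<forall>v\<in>V. \<exists>xs. walk T xs \<and> hd xs = u \<and> last xs = v)"

definition is_tree :: "nat set \<Rightarrow> nat set set \<Rightarrow> bool" where
  "is_tree V T \<longleftrightarrow> (\<forall>e\<in>T. card e = 2 \<and> e \<subseteq> V) \<and> connected_on V T \<and> \<not> has_cycle T"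

definition diam_le :: "nat set \<Rightarrow> nat set set \<Rightarrow> nat \<Rightarrow> bool" where
  "diam_le V T k \<longleftrightarrow> (\<forall>u\<in>V. \<forall>v\<in>V. \<exists>xs. walk T xs \<and> hd xs = u \<and> last xs = v \<and> length xs \<le> Suc k)"

definition simple_trees_diam :: "nat \<Rightarrow> nat \<Rightarrow> nat set set set" where
  "simple_trees_diam n k = {T. T \<subseteq> cvx_edges n \<and> is_tree (cvx_vertices n) T
      \<and> noncrossing T \<and> diam_le (cvx_vertices n) T k}"

definition blocks :: "nat \<Rightarrow> nat set set \<Rightarrow> nat set set set \<Rightarrow> bool" where
  "blocks n B F \<longleftrightarrow> B \<subseteq> cvx_edges n \<and> (\<forall>T\<in>F. B \<inter> T \<noteq> {})"

definition is_blocker :: "nat \<Rightarrow> nat set set \<Rightarrow> nat set set set \<Rightarrow> bool" where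
  "is_blocker n B F \<longleftrightarrow> blocks n B F \<and> (\<forall>B'. blocks n B' F \<longrightarrow> card B \<le> card B')"

definition is_star :: "nat \<Rightarrow> nat set set \<Rightarrow> bool" where
  "is_star n B \<longleftrightarrow> (\<exists>v\<in>cvx_vertices n. B = {e \<in> cvx_edges n. v \<in> e})"

definition degree :: "nat set set \<Rightarrow> nat \<Rightarrow> nat" where
  "degree B v = card {e \<in> B. v \<in> e}"

definition leaves :: "nat set set \<Rightarrow> nat set" where
  "leaves B = {v. degree B v = 1}"

definition caterpillar :: "nat set set \<Rightarrow> bool" where
  "caterpillar B \<longleftrightarrow> is_tree (\<Union>B) B \<and>
     (let I = \<Union>B - leaves B; B' = {e \<in> B. e \<subseteq> I} in
        I = {} \<or> (\<exists>xs. distinct xs \<and> set xs = I \<and>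
                   B' = {{xs ! i, xs ! Suc i} | i. Suc i < length xs}))"

definition is_spine :: "nat set set \<Rightarrow> nat list \<Rightarrow> bool" where
  "is_spine B P \<longleftrightarrow> gpath B P \<and> (\<forall>Q. gpath B Q \<longrightarrow> length Q \<le> length P)"

end

theory Submission
  imports Defs
begin
definition off :: "nat \<Rightarrow> nat \<Rightarrow> nat \<Rightarrow> nat" where
  "off n x y = (if x \<le> y then y - x else y + n - x)"

lemma off_lt: "x < n \<Longrightarrow> y < n \<Longrightarrow> off n x y < n"
  by (auto simp: off_def)

lemma off_self[simp]: "off n x x = 0"
  by (auto simp: off_def)

lemma off_eq0: "x < n \<Longrightarrow> y < n \<Longrightarrow> off n x y = 0 \<longleftrightarrow> x = y"
  by (auto simp: off_def)

lemma off_inj: "x < n \<Longrightarrow> y < n \<Longrightarrow> z < n \<Longrightarrow> off n x y = off n x z \<longleftrightarrow> y = z"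
  by (auto simp: off_def)

lemma off_rot: "x < n \<Longrightarrow> y < n \<Longrightarrow> v < n \<Longrightarrow> off n (off n v x) (off n v y) = off n x y"
  by (auto simp: off_def)

lemma mod_off: "x < n \<Longrightarrow> y < n \<Longrightarrow> (y + n - x) mod n = off n x y"
proof -
  assume a: "x < n" "y < n"
  show ?thesis
  proof (cases "x \<le> y")
    case True
    then have "y + n - x = (y - x) + n" by simp
    then have "(y + n - x) mod n = (y - x) mod n" by simp
    also have "\<dots> = y - x" using a by simp
    finally show ?thesis using True by (simp add: off_def)
  next
    case False
    then show ?thesis using a by (simp add: off_def)
  qed
qed

lemma add_mod_off: "x < n \<Longrightarrow> k < n \<Longrightarrow> (x + k) mod n = (if x + k < n then x + k else x + k - (n::nat))"
proof (cases "x + k < n")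
  case False
  assume a: "x < n" "k < n"
  then have "(x + k) mod n = (x + k - n) mod n" using False by (metis le_mod_geq not_less)
  also have "\<dots> = x + k - n" using a by simp
  finally show ?thesis using False by simp
qed simp

lemma cyc_arc_off: assumes "x < n" "y < n" "z < n"
  shows "y \<in> cyc_arc n x z \<longleftrightarrow> off n x y \<le> off n x z"
proof
  assume "y \<in> cyc_arc n x z"
  then obtain k where k: "y = (x + k) mod n" "k \<le> (z + n - x) mod n"
    unfolding cyc_arc_def by auto
  have "(z + n - x) mod n < n" using assms(1) by simp
  then have kn: "k < n" using k(2) by linarith
  have y: "y = (if x + k < n then x + k else x + k - (n::nat))"
    using k(1) add_mod_off[OF assms(1) kn] by simp
  have "off n x y = k"
  proof (cases "x + k < n")
    case True
    then show ?thesis using y by (simp add: off_def)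
  next
    case False
    then have "y = x + k - n" using y by simp
    moreover have "\<not> x \<le> x + k - n" using False assms(1) kn by linarith
    ultimately show ?thesis using False by (simp add: off_def)
  qed
  then show "off n x y \<le> off n x z" using k(2) assms by (simp add: mod_off)
next
  assume h: "off n x y \<le> off n x z"
  have e: "y = (x + off n x y) mod n"
  proof (cases "x \<le> y")
    case True
    then have "x + off n x y = y" by (simp add: off_def)
    then show ?thesis using assms(2) by simp
  next
    case False
    then have "x + off n x y = y + n" using assms by (simp add: off_def)
    then show ?thesis using assms(2) by simp
  qed
  have "off n x y \<le> (z + n - x) mod n" using h assms by (simp add: mod_off)
  then show "y \<in> cyc_arc n x z" unfolding cyc_arc_def using e by blast
qed

lemma hull_off: assumes "{x, y} \<in> hull_edges n"
  shows "x < n \<and> y < n \<and> x \<noteq> y \<and> (off n x y = 1 \<or> off n y x = 1)"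
proof -
  obtain i where i: "{x,y} = {i, Suc i mod n}" "i < n" "Suc i mod n \<noteq> i"
    using assms unfolding hull_edges_def by auto
  define j where "j = Suc i mod n"
  have n: "n > 0" using i by auto
  have jn: "j < n" using n by (simp add: j_def)
  have ij: "i \<noteq> j" using i(3) by (simp add: j_def)
  have oij: "off n i j = 1"
  proof (cases "Suc i < n")
    case True
    then have "j = Suc i" by (simp add: j_def)
    then show ?thesis by (simp add: off_def)
  next
    case False
    then have "Suc i = n" using i(2) by simp
    then have "j = 0" by (simp add: j_def)
    then show ?thesis using \<open>Suc i = n\<close> ij by (simp add: off_def)
  qed
  have "(x = i \<and> y = j) \<or> (x = j \<and> y = i)" using i(1) unfolding j_def by (simp add: doubleton_eq_iff)
  then show ?thesis using oij ij jn i(2) by blast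
qed

lemma sb_alt: "strictly_between p q x \<longleftrightarrow> (p < x \<and> x < q) \<or> (q < x \<and> x < p)"
  unfolding strictly_between_def by (auto simp: min_def max_def)

lemma sb_off: assumes "p < n" "q < n" "r < n" "s < n" "distinct [p,q,r,s]"
  shows "(strictly_between p q r \<noteq> strictly_between p q s) \<longleftrightarrow>
         ((off n p r < off n p q) \<noteq> (off n p s < off n p q))"
  using assms unfolding sb_alt off_def by (simp add: neq_iff) (elim disjE conjE; simp; linarith)

lemma card4_distinct: "card {p, q, r, s :: nat} = 4 \<Longrightarrow> distinct [p, q, r, s]"
  by (auto simp: card_insert_if split: if_splits)

lemma crosses_iff: "crosses {p, q} {r, s} \<longleftrightarrow>
   card {p, q, r, s} = 4 \<and> (strictly_between p q r \<noteq> strictly_between p q s)"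
proof
  assume "crosses {p, q} {r, s}"
  then obtain a b c d where h: "{p,q} = {a,b}" "{r,s} = {c,d}" "card {a,b,c,d} = 4"
    "strictly_between a b c \<noteq> strictly_between a b d" unfolding crosses_def by blast
  have e: "{a,b,c,d} = {p,q,r,s}" using h(1,2) by auto
  have sym: "\<And>x. strictly_between q p x = strictly_between p q x" by (auto simp: sb_alt)
  have "(a = p \<and> b = q) \<or> (a = q \<and> b = p)" using h(1) by (auto simp: doubleton_eq_iff)
  then have sab: "strictly_between a b = strictly_between p q"
    using sym by (auto simp: fun_eq_iff)
  have "strictly_between a b c \<noteq> strictly_between a b d \<longleftrightarrow> strictly_between a b r \<noteq> strictly_between a b s"
    using h(2) by (auto simp: doubleton_eq_iff)
  then show "card {p, q, r, s} = 4 \<and> (strictly_between p q r \<noteq> strictly_between p q s)"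
    using h e sab by simp
next
  assume "card {p, q, r, s} = 4 \<and> (strictly_between p q r \<noteq> strictly_between p q s)"
  then show "crosses {p, q} {r, s}" unfolding crosses_def by blast
qed

lemma crosses_sym: "crosses {p, q} {r, s} \<Longrightarrow> crosses {r, s} {p, q}"
  unfolding crosses_iff
proof -
  assume h: "card {p, q, r, s} = 4 \<and> (strictly_between p q r \<noteq> strictly_between p q s)"
  then have d: "distinct [p,q,r,s]" using card4_distinct by blast
  have "{r,s,p,q} = {p,q,r,s}" by auto
  moreover have "strictly_between r s p \<noteq> strictly_between r s q"
    using h d unfolding sb_alt by (simp add: neq_iff) (elim disjE conjE; linarith)
  ultimately show "card {r, s, p, q} = 4 \<and> (strictly_between r s p \<noteq> strictly_between r s q)"
    using h by simp
qed

lemma crosses_share: "\<not> crosses {p, q} {p, s}"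
proof
  assume "crosses {p, q} {p, s}"
  then have "distinct [p, q, p, s]" using crosses_iff card4_distinct by blast
  then show False by simp
qed

lemma walk_Cons2: "walk T (x # y # zs) \<longleftrightarrow> {x, y} \<in> T \<and> walk T (y # zs)"
proof
  assume "walk T (x # y # zs)"
  then show "{x, y} \<in> T \<and> walk T (y # zs)"
    unfolding walk_def by (auto dest: spec[of _ "Suc _"]  spec[of _ 0])
next
  assume h: "{x, y} \<in> T \<and> walk T (y # zs)"
  show "walk T (x # y # zs)" unfolding walk_def
  proof (intro conjI allI impI)
    fix i assume "Suc i < length (x # y # zs)"
    then show "{(x # y # zs) ! i, (x # y # zs) ! Suc i} \<in> T"
      using h unfolding walk_def by (cases i) auto
  qed simp
qed

lemma walk_single[simp]: "walk T [x]"
  by (simp add: walk_def)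

lemma walk_Cons: "ys \<noteq> [] \<Longrightarrow> walk T (x # ys) \<longleftrightarrow> {x, hd ys} \<in> T \<and> walk T ys"
  by (cases ys) (auto simp: walk_Cons2)

lemma walk_take: "walk T xs \<Longrightarrow> 0 < k \<Longrightarrow> walk T (take k xs)"
  unfolding walk_def by auto

lemma walk_rev: assumes "walk T xs" shows "walk T (rev xs)"
  unfolding walk_def
proof (intro conjI allI impI)
  show "rev xs \<noteq> []" using assms by (simp add: walk_def)
  fix i assume i: "Suc i < length (rev xs)"
  define L where "L = length xs"
  define j where "j = L - Suc (Suc i)"
  have j: "Suc j < L" "Suc j = L - Suc i" using i by (auto simp: j_def L_def)
  have "{xs ! j, xs ! Suc j} \<in> T" using assms j(1) by (simp add: walk_def L_def)
  moreover have "rev xs ! i = xs ! Suc j" using i j by (simp add: rev_nth L_def)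
  moreover have "rev xs ! Suc i = xs ! j" using i j by (simp add: rev_nth L_def j_def)
  ultimately show "{rev xs ! i, rev xs ! Suc i} \<in> T" by (simp add: insert_commute)
qed

fun chainT :: "nat set set \<Rightarrow> nat list \<Rightarrow> bool" where
  "chainT T (x # y # zs) = ((x = y \<or> {x, y} \<in> T) \<and> chainT T (y # zs))"
| "chainT T _ = True"

lemma chain_walk: "xs \<noteq> [] \<Longrightarrow> chainT T xs \<Longrightarrow> walk T (remdups_adj xs)"
proof (induction xs rule: remdups_adj.induct)
  case (3 x y xs)
  show ?case
  proof (cases "x = y")
    case True
    then show ?thesis using 3 by simp
  next
    case False
    have "walk T (remdups_adj (y # xs))" using 3 False by simp
    moreover have "hd (remdups_adj (y # xs)) = y" by (simp add: hd_remdups_adj)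
    ultimately show ?thesis using 3 False by (simp add: walk_Cons)
  qed
qed auto

lemma crosses_disj: "crosses e f \<Longrightarrow> e \<inter> f = {}"
proof -
  assume "crosses e f"
  then obtain a b c d where h: "e = {a,b}" "f = {c,d}" "card {a,b,c,d} = 4"
    unfolding crosses_def by blast
  then have "distinct [a,b,c,d]" using card4_distinct by blast
  then show ?thesis using h by auto
qed

lemma spine_end:
  assumes nc: "\<not> has_cycle B" and c2: "\<forall>e\<in>B. card e = 2" and sp: "is_spine B P"
    and L: "2 \<le> length P" and e: "e \<in> B" "P ! 0 \<in> e"
  shows "e = {P ! 0, P ! 1}"
proof -
  obtain x y where xy: "e = {x,y}" "x \<noteq> y" using c2 e(1) card_2_iff by metis
  have "(e = {P ! 0, y} \<and> y \<noteq> P ! 0) \<or> (e = {P ! 0, x} \<and> x \<noteq> P ! 0)"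
    using xy e(2) by (auto simp: insert_commute)
  then obtain w where w: "e = {P ! 0, w}" "w \<noteq> P ! 0" by blast
  have gp: "gpath B P" and lng: "\<And>Q. gpath B Q \<Longrightarrow> length Q \<le> length P"
    using sp unfolding is_spine_def by auto
  have Pne: "P \<noteq> []" using L by auto
  have hdP: "hd P = P ! 0" using Pne by (simp add: hd_conv_nth)
  show ?thesis
  proof (cases "w \<in> set P")
    case False
    have "{w, hd P} \<in> B" using w e(1) hdP by (simp add: insert_commute)
    then have "walk B (w # P)" using gp Pne walk_Cons[of P B w] unfolding gpath_def by simp
    moreover have "distinct (w # P)" using False gp unfolding gpath_def by simp
    ultimately have "gpath B (w # P)" unfolding gpath_def by simp
    then have "length (w # P) \<le> length P" by (rule lng)
    then show ?thesis by simp
  next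
    case True
    then obtain k where k: "k < length P" "P ! k = w" by (auto simp: in_set_conv_nth)
    have k0: "k \<noteq> 0" using k w by (metis)
    show ?thesis
    proof (cases "k = 1")
      case True
      then show ?thesis using w k by simp
    next
      case False
      define xs where "xs = take (Suc k) P"
      have lxs: "length xs = Suc k" using k by (simp add: xs_def)
      have "walk B xs" using gp walk_take[of B P "Suc k"] unfolding gpath_def xs_def by simp
      moreover have "distinct xs" using gp unfolding gpath_def xs_def by simp
      ultimately have gx: "gpath B xs" unfolding gpath_def by simp
      have "last xs = P ! k" using k by (simp add: take_Suc_conv_app_nth xs_def)
      moreover have "hd xs = P ! 0" using lxs hdP by (simp add: xs_def)
      ultimately have "{last xs, hd xs} \<in> B" using w k e(1) by (simp add: insert_commute)
      moreover have "length xs \<ge> 3" using lxs k0 False by simp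
      ultimately have "has_cycle B" using gx unfolding has_cycle_def by blast
      then show ?thesis using nc by simp
    qed
  qed
qed

lemma spine_rev: "is_spine B P \<Longrightarrow> is_spine B (rev P)"
  unfolding is_spine_def gpath_def using walk_rev by (metis distinct_rev length_rev)

lemma degree_ge2:
  assumes "finite B" "{x, p} \<in> B" "{x, q} \<in> B" "p \<noteq> q"
  shows "degree B x \<noteq> 1"
proof -
  have ne: "{x, p} \<noteq> {x, q}" using assms(4) by (auto simp: doubleton_eq_iff)
  have sub: "{{x, p}, {x, q}} \<subseteq> {e \<in> B. x \<in> e}" using assms(2,3) by auto
  have "card {{x, p}, {x, q}} = 2" using ne by simp
  moreover have "card {{x, p}, {x, q}} \<le> card {e \<in> B. x \<in> e}"
    using sub assms(1) by (intro card_mono) auto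
  ultimately show ?thesis unfolding degree_def by linarith
qed

lemma leaf_nb:
  assumes "v \<in> leaves B" "\<forall>e\<in>B. card e = 2"
  shows "\<exists>u. u \<noteq> v \<and> {v, u} \<in> B \<and> (\<forall>e\<in>B. v \<in> e \<longrightarrow> e = {v, u})"
proof -
  have "card {e \<in> B. v \<in> e} = 1" using assms(1) unfolding leaves_def degree_def by (rule CollectD)
  then have "card {e \<in> B. v \<in> e} = Suc 0" by (simp only: One_nat_def)
  then have "\<exists>e0. {e \<in> B. v \<in> e} = {e0}" by (rule card_1_singleton_iff[THEN iffD1])
  then obtain e0 where e0: "{e \<in> B. v \<in> e} = {e0}" by blast
  then have e0B: "e0 \<in> B" "v \<in> e0" by auto
  obtain x y where xy: "e0 = {x,y}" "x \<noteq> y" using assms(2) e0B(1) card_2_iff by metis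
  have "(e0 = {v, y} \<and> y \<noteq> v) \<or> (e0 = {v, x} \<and> x \<noteq> v)"
    using xy e0B(2) by (auto simp: insert_commute)
  then obtain u where u: "e0 = {v, u}" "u \<noteq> v" by blast
  have "\<forall>e\<in>B. v \<in> e \<longrightarrow> e = {v, u}" using e0 u(1) by blast
  then show ?thesis using u e0B by blast
qed

definition dstar :: "nat \<Rightarrow> nat \<Rightarrow> nat \<Rightarrow> nat set \<Rightarrow> nat set set" where
  "dstar n v c S = insert {v, c} ((\<lambda>w. {c, w}) ` S \<union> (\<lambda>w. {v, w}) ` ({..<n} - S - {v, c}))"

lemma dstar_cases:
  assumes "e \<in> dstar n v c S"
  obtains "e = {v, c}" | z where "z \<in> S" "e = {c, z}"
    | w where "w < n" "w \<notin> S" "w \<noteq> v" "w \<noteq> c" "e = {v, w}"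
proof -
  consider "e = {v, c}" | "e \<in> (\<lambda>w. {c, w}) ` S" | "e \<in> (\<lambda>w. {v, w}) ` ({..<n} - S - {v, c})"
    using assms unfolding dstar_def by blast
  then show thesis
  proof cases
    case 1 then show thesis using that(1) by blast
  next
    case 2
    then obtain z where "z \<in> S" "e = {c, z}" by blast
    then show thesis using that(2) by blast
  next
    case 3
    then obtain w where w: "w \<in> {..<n} - S - {v, c}" "e = {v, w}" by blast
    then have "w < n" "w \<notin> S" "w \<noteq> v" "w \<noteq> c" by auto
    then show thesis using that(3) w(2) by blast
  qed
qed

context
  fixes n v c :: nat and S :: "nat set"
  assumes vn: "v < n" and cn: "c < n" and vc: "v \<noteq> c" and Sn: "S \<subseteq> {..<n}"
    and vS: "v \<notin> S" and cS: "c \<notin> S"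
begin

definition hc :: "nat \<Rightarrow> nat" where
  "hc x = (if x = v then v else if x = c then c else if x \<in> S then c else v)"

lemma hc_vc: "hc x = v \<or> hc x = c"
  unfolding hc_def by auto

lemma vc_in: "{v, c} \<in> dstar n v c S"
  unfolding dstar_def by simp

lemma hc_edge: assumes "x < n" "x \<noteq> hc x" shows "{x, hc x} \<in> dstar n v c S"
proof -
  have "x = v \<Longrightarrow> hc x = x" "x = c \<Longrightarrow> hc x = x" by (simp_all add: hc_def)
  then have xv: "x \<noteq> v" and xc: "x \<noteq> c" using assms(2) by auto
  show ?thesis
  proof (cases "x \<in> S")
    case True
    then have "hc x = c" using xv xc unfolding hc_def by simp
    moreover have "{c, x} \<in> dstar n v c S" using True unfolding dstar_def by blast
    ultimately show ?thesis by (simp add: insert_commute)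
  next
    case False
    then have "hc x = v" using xv xc unfolding hc_def by simp
    moreover have "{v, x} \<in> dstar n v c S" using False xv xc assms(1) unfolding dstar_def by blast
    ultimately show ?thesis by (simp add: insert_commute)
  qed
qed

lemma dstar_nb:
  assumes "{x, p} \<in> dstar n v c S" "x \<noteq> v" "x \<noteq> c"
  shows "p = hc x"
  using assms(1)
proof (cases rule: dstar_cases)
  case 1
  then show ?thesis using assms(2,3) by (auto simp: doubleton_eq_iff)
next
  case (2 z)
  then have "x = z" "p = c" using assms(3) by (auto simp: doubleton_eq_iff)
  then show ?thesis using 2 assms(2,3) unfolding hc_def by simp
next
  case (3 w)
  then have "x = w" "p = v" using assms(2) by (auto simp: doubleton_eq_iff)
  then show ?thesis using 3 assms(2,3) unfolding hc_def by simp
qed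

lemma dstar_center:
  assumes "{x, p} \<in> dstar n v c S" "{x, q} \<in> dstar n v c S" "p \<noteq> q"
  shows "x = v \<or> x = c"
  using dstar_nb[OF assms(1)] dstar_nb[OF assms(2)] assms(3) by blast

lemma dstar_edges:
  assumes "e \<in> dstar n v c S"
  shows "\<exists>x y. e = {x, y} \<and> x < n \<and> y < n \<and> x \<noteq> y"
  using assms
proof (cases rule: dstar_cases)
  case 1
  then show ?thesis using vn cn vc by blast
next
  case (2 z)
  then show ?thesis using cn Sn cS by blast
next
  case (3 w)
  then show ?thesis using vn by blast
qed

lemma dstar_acyclic: "\<not> has_cycle (dstar n v c S)"
proof
  assume "has_cycle (dstar n v c S)"
  then obtain xs where gx: "gpath (dstar n v c S) xs" and L3: "length xs \<ge> 3"
    and cl: "{last xs, hd xs} \<in> dstar n v c S" unfolding has_cycle_def by blast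
  define T where "T = dstar n v c S"
  define L where "L = length xs"
  have w: "\<And>i. Suc i < L \<Longrightarrow> {xs ! i, xs ! Suc i} \<in> T"
    using gx unfolding gpath_def walk_def T_def L_def by blast
  have dxs: "distinct xs" using gx unfolding gpath_def by simp
  have neq: "\<And>i j. i < L \<Longrightarrow> j < L \<Longrightarrow> i \<noteq> j \<Longrightarrow> xs ! i \<noteq> xs ! j"
    using dxs unfolding L_def by (simp add: nth_eq_iff_index_eq)
  have xsne: "xs \<noteq> []" using L3 by auto
  have lst: "last xs = xs ! (L - 1)" using xsne unfolding L_def by (simp add: last_conv_nth)
  have hd: "hd xs = xs ! 0" using xsne by (simp add: hd_conv_nth)
  have cl': "{xs ! 0, xs ! (L - 1)} \<in> T" using cl lst hd unfolding T_def by (simp add: insert_commute)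
  have e01: "{xs ! 0, xs ! 1} \<in> T" using w[of 0] L3 unfolding L_def by simp
  have e10: "{xs ! 1, xs ! 0} \<in> T" using e01 by (simp add: insert_commute)
  have e12: "{xs ! 1, xs ! 2} \<in> T" using w[of 1] L3 unfolding L_def by (simp add: numeral_2_eq_2)
  have e21: "{xs ! 2, xs ! 1} \<in> T" using e12 by (simp add: insert_commute)
  have n1L: "xs ! 1 \<noteq> xs ! (L - 1)" using neq[of 1 "L - 1"] L3 unfolding L_def by simp
  have n02: "xs ! 0 \<noteq> xs ! 2" using neq[of 0 2] L3 xsne unfolding L_def by simp
  have c0: "xs ! 0 = v \<or> xs ! 0 = c"
    using dstar_center[of "xs ! 0" "xs ! 1" "xs ! (L - 1)"] e01 cl' n1L unfolding T_def by blast
  have c1: "xs ! 1 = v \<or> xs ! 1 = c"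
    using dstar_center[of "xs ! 1" "xs ! 0" "xs ! 2"] e10 e12 n02 unfolding T_def by blast
  have "\<exists>r. {xs ! 2, r} \<in> T \<and> r \<noteq> xs ! 1"
  proof (cases "L = 3")
    case True
    then have "{xs ! 2, xs ! 0} \<in> T" using cl' by (simp add: insert_commute)
    then show ?thesis using neq[of 0 1] True by auto
  next
    case False
    then have "{xs ! 2, xs ! 3} \<in> T" using w[of 2] L3 unfolding L_def by (simp add: numeral_3_eq_3)
    then show ?thesis using neq[of 1 3] False L3 unfolding L_def by auto
  qed
  then obtain r where r: "{xs ! 2, r} \<in> T" "r \<noteq> xs ! 1" by blast
  have c2: "xs ! 2 = v \<or> xs ! 2 = c"
    using dstar_center[of "xs ! 2" "xs ! 1" r] e21 r unfolding T_def by simp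
  have d01: "xs ! 0 \<noteq> xs ! 1" using neq[of 0 1] L3 xsne unfolding L_def by auto
  have d12: "xs ! 1 \<noteq> xs ! 2" using neq[of 1 2] L3 xsne unfolding L_def by auto
  from c0 show False
  proof
    assume h0: "xs ! 0 = v"
    then have h1: "xs ! 1 = c" using c1 d01 by simp
    from c2 show False
    proof
      assume "xs ! 2 = v" then show False using h0 n02 by simp
    next
      assume "xs ! 2 = c" then show False using h1 d12 by simp
    qed
  next
    assume h0: "xs ! 0 = c"
    then have h1: "xs ! 1 = v" using c1 d01 by auto
    from c2 show False
    proof
      assume "xs ! 2 = v" then show False using h1 d12 by simp
    next
      assume "xs ! 2 = c" then show False using h0 n02 by simp
    qed
  qed
qed

lemma dstar_diam:
  assumes "p < n" "q < n"
  shows "\<exists>xs. walk (dstar n v c S) xs \<and> hd xs = p \<and> last xs = q \<and> length xs \<le> Suc 3"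
proof -
  define T where "T = dstar n v c S"
  have a: "p = hc p \<or> {p, hc p} \<in> T" using hc_edge[OF assms(1)] unfolding T_def by blast
  have b: "hc q = q \<or> {hc q, q} \<in> T" using hc_edge[OF assms(2)] unfolding T_def
    by (metis insert_commute)
  have "hc p = hc q \<or> {hc p, hc q} \<in> T"
    using hc_vc[of p] hc_vc[of q] vc_in unfolding T_def by (auto simp: insert_commute)
  then have ch: "chainT T [p, hc p, hc q, q]" using a b by simp
  define xs where "xs = remdups_adj [p, hc p, hc q, q]"
  have "walk T xs" unfolding xs_def by (rule chain_walk[OF _ ch]) simp
  moreover have "hd xs = p" unfolding xs_def by simp
  moreover have "last xs = q" unfolding xs_def by simp
  moreover have "length xs \<le> Suc 3" unfolding xs_def
    using remdups_adj_length[of "[p, hc p, hc q, q]"] by simp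
  ultimately show ?thesis unfolding T_def by blast
qed

lemma dstar_tree:
  assumes nc: "\<And>w z. w < n \<Longrightarrow> z \<in> S \<Longrightarrow> w \<notin> S \<Longrightarrow> w \<noteq> v \<Longrightarrow> w \<noteq> c \<Longrightarrow> \<not> crosses {v, w} {c, z}"
  shows "dstar n v c S \<in> simple_trees_diam n 3"
proof -
  define T where "T = dstar n v c S"
  have sub: "T \<subseteq> cvx_edges n"
  proof
    fix e assume "e \<in> T"
    then obtain x y where "e = {x, y}" "x < n" "y < n" "x \<noteq> y" using dstar_edges unfolding T_def by blast
    then show "e \<in> cvx_edges n" unfolding cvx_edges_def by blast
  qed
  have edges: "\<forall>e\<in>T. card e = 2 \<and> e \<subseteq> cvx_vertices n"
  proof
    fix e assume "e \<in> T"
    then obtain x y where "e = {x, y}" "x < n" "y < n" "x \<noteq> y" using dstar_edges unfolding T_def by blast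
    then show "card e = 2 \<and> e \<subseteq> cvx_vertices n" unfolding cvx_vertices_def by auto
  qed
  have diam: "diam_le (cvx_vertices n) T 3"
    unfolding diam_le_def cvx_vertices_def T_def using dstar_diam by simp
  have conn: "connected_on (cvx_vertices n) T"
    using diam unfolding diam_le_def connected_on_def by blast
  have ncr: "noncrossing T"
    unfolding noncrossing_def
  proof (intro ballI)
    fix e f assume e: "e \<in> T" and f: "f \<in> T"
    show "\<not> crosses e f"
    proof
      assume cr: "crosses e f"
      then have disj: "e \<inter> f = {}" by (rule crosses_disj)
      from e show False unfolding T_def
      proof (cases rule: dstar_cases)
        case 1
        from f show False unfolding T_def
        proof (cases rule: dstar_cases)
          case 1 then show False using disj \<open>e = {v, c}\<close> by auto
        next
          case (2 z) then show False using disj \<open>e = {v, c}\<close> by auto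
        next
          case (3 w) then show False using disj \<open>e = {v, c}\<close> by auto
        qed
      next
        case (2 z)
        from f show False unfolding T_def
        proof (cases rule: dstar_cases)
          case 1 then show False using disj \<open>e = {c, z}\<close> by auto
        next
          case (2 z') then show False using disj \<open>e = {c, z}\<close> by auto
        next
          case (3 w)
          then have "crosses {v, w} {c, z}" using cr \<open>e = {c, z}\<close> crosses_sym by simp
          then show False using nc[of w z] 3 \<open>z \<in> S\<close> by blast
        qed
      next
        case (3 w)
        from f show False unfolding T_def
        proof (cases rule: dstar_cases)
          case 1 then show False using disj \<open>e = {v, w}\<close> by auto
        next
          case (2 z)
          then have "crosses {v, w} {c, z}" using cr \<open>e = {v, w}\<close> by simp
          then show False using nc[of w z] 3 \<open>z \<in> S\<close> by blast
        next
          case (3 w') then show False using disj \<open>e = {v, w}\<close> by auto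
        qed
      qed
    qed
  qed
  have "is_tree (cvx_vertices n) T"
    unfolding is_tree_def using edges conn dstar_acyclic unfolding T_def by blast
  then show ?thesis using sub ncr diam unfolding simple_trees_diam_def T_def by blast
qed

end

lemma arith_cases:
  fixes n A A' B B' U :: nat
  assumes lt: "A < n" "A' < n" "B < n" "B' < n" "U < n"
    and nz: "A \<noteq> 0" "A' \<noteq> 0" "B \<noteq> 0" "B' \<noteq> 0" "U \<noteq> 0"
    and ne: "U \<noteq> A" "U \<noteq> B" "A \<noteq> B"
    and h1: "off n A A' = 1 \<or> off n A' A = 1"
    and h2: "off n B' B = 1 \<or> off n B B' = 1"
    and h3: "off n A A' \<le> off n A B"
    and h4: "off n A B' \<le> off n A B"
    and h5: "\<not> off n B 0 \<le> off n B A"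
    and h6: "A' = B \<Longrightarrow> B' = A"
    and h7: "B' = A \<Longrightarrow> A' = B"
  shows "(A' = A + 1 \<and> U < A) \<or> (A' + 1 = A \<and> A < U) \<or> (B' = B + 1 \<and> U < B) \<or> (B' + 1 = B \<and> B < U)"
proof -
  have BA: "B < A" using h5 nz(3) ne(3) lt by (cases "B \<le> A") (auto simp: off_def)
  have a1: "A' = A + 1 \<or> A' + 1 = A" using h1 nz lt unfolding off_def by (auto split: if_splits)
  have b1: "B' = B + 1 \<or> B' + 1 = B" using h2 nz lt unfolding off_def by (auto split: if_splits)
  have oAB: "off n A B = B + n - A" using BA by (simp add: off_def)
  have a2: "A' = A + 1 \<or> A' = B"
    using a1 h3 oAB BA lt by (auto simp: off_def split: if_splits)
  have b2: "B' + 1 = B \<or> B' = A"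
    using b1 h4 oAB BA lt by (auto simp: off_def split: if_splits)
  show ?thesis
  proof (cases "A' = B")
    case True
    then have "B' = A" using h6 by simp
    then show ?thesis using True a1 b1 BA ne by auto
  next
    case False
    then have x: "A' = A + 1" using a2 by simp
    then have "B' \<noteq> A" using h7 False by auto
    then have "B' + 1 = B" using b2 by simp
    then show ?thesis using x BA ne by auto
  qed
qed

lemma cvx_edge_lt: "{x, y} \<in> cvx_edges n \<Longrightarrow> x < n \<and> y < n"
  unfolding cvx_edges_def by (auto simp: doubleton_eq_iff)

lemma gen:
  assumes bl: "blocks n B (simple_trees_diam n 3)"
    and vn: "v < n" and cn: "c < n" and vc: "v \<noteq> c" and un: "u < n" and c'n: "c' < n"
    and lo: "1 \<le> lo" and hi: "hi < n"
    and C: "off n v c + 1 = lo \<or> off n v c = hi + 1"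
    and vnb: "\<forall>e\<in>B. v \<in> e \<longrightarrow> e = {v, u}"
    and cnb: "\<forall>e\<in>B. c \<in> e \<longrightarrow> e = {c, c'}"
    and uc: "u \<noteq> c"
    and uS: "lo \<le> off n v u" "off n v u \<le> hi"
    and c'S: "\<not> (lo \<le> off n v c' \<and> off n v c' \<le> hi)"
  shows False
proof -
  define S where "S = {w. w < n \<and> lo \<le> off n v w \<and> off n v w \<le> hi}"
  have Sn: "S \<subseteq> {..<n}" unfolding S_def by auto
  have vS: "v \<notin> S" using lo unfolding S_def by simp
  have cS: "c \<notin> S" using C unfolding S_def by auto
  have uSS: "u \<in> S" using un uS unfolding S_def by simp
  have c'SS: "c' \<notin> S" using c'S unfolding S_def by simp
  have nc: "\<not> crosses {v, w} {c, z}"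
    if w: "w < n" "z \<in> S" "w \<notin> S" "w \<noteq> v" "w \<noteq> c" for w z
  proof
    assume "crosses {v, w} {c, z}"
    then have cr: "card {v, w, c, z} = 4" "strictly_between v w c \<noteq> strictly_between v w z"
      unfolding crosses_iff by auto
    have d: "distinct [v, w, c, z]" using cr(1) by (rule card4_distinct)
    have zn: "z < n" using w(2) unfolding S_def by simp
    have x: "(off n v c < off n v w) \<noteq> (off n v z < off n v w)"
      using sb_off[OF vn w(1) cn zn d] cr(2) by simp
    have W0: "off n v w \<noteq> 0" using off_eq0[OF vn w(1)] w(4) by auto
    have WC: "off n v w \<noteq> off n v c" using off_inj[OF vn w(1) cn] w(5) by simp
    have WS: "\<not> (lo \<le> off n v w \<and> off n v w \<le> hi)" using w(1,3) unfolding S_def by simp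
    have ZS: "lo \<le> off n v z" "off n v z \<le> hi" using w(2) unfolding S_def by auto
    show False using x W0 WC WS ZS C by linarith
  qed
  have T: "dstar n v c S \<in> simple_trees_diam n 3"
    by (rule dstar_tree[OF vn cn vc Sn vS cS nc])
  then obtain e where e: "e \<in> B" "e \<in> dstar n v c S" using bl unfolding blocks_def by blast
  from e(2) show False
  proof (cases rule: dstar_cases)
    case 1
    then have "{v, c} = {v, u}" using vnb e(1) by simp
    then show False using uc vc by (auto simp: doubleton_eq_iff)
  next
    case (2 z)
    then have "{c, z} = {c, c'}" using cnb e(1) by simp
    then have "z = c' \<or> z = c" by (auto simp: doubleton_eq_iff)
    then show False using 2 cS c'SS by auto
  next
    case (3 w)
    then have "{v, w} = {v, u}" using vnb e(1) by simp
    then have "w = u" using 3 by (auto simp: doubleton_eq_iff)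
    then show False using 3 uSS by simp
  qed
qed

lemma main1:
  assumes bl: "blocks n B (simple_trees_diam n 3)"
    and anb: "\<forall>e\<in>B. a \<in> e \<longrightarrow> e = {a, a'}" and aB: "{a, a'} \<in> B"
    and bnb: "\<forall>e\<in>B. b \<in> e \<longrightarrow> e = {b, b'}" and bB: "{b, b'} \<in> B"
    and ha: "{a, a'} \<in> hull_edges n" and hb: "{b', b} \<in> hull_edges n"
    and al: "a' \<in> cyc_arc n a b" "b' \<in> cyc_arc n a b"
    and ab: "a \<noteq> b"
    and vl: "v \<in> leaves B" and vb: "v \<notin> cyc_arc n b a" and va': "v \<noteq> a'" and vb': "v \<noteq> b'"
    and c2: "\<forall>e\<in>B. card e = 2" and Bsub: "B \<subseteq> cvx_edges n"
  shows False
proof -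
  obtain u where u: "u \<noteq> v" "{v, u} \<in> B" "\<forall>e\<in>B. v \<in> e \<longrightarrow> e = {v, u}"
    using leaf_nb[OF vl c2] by blast
  have vn: "v < n" and un: "u < n" using cvx_edge_lt u(2) Bsub by blast+
  have ha': "a < n" "a' < n" "off n a a' = 1 \<or> off n a' a = 1" using hull_off[OF ha] by auto
  have hb': "b' < n" "b < n" "off n b' b = 1 \<or> off n b b' = 1" using hull_off[OF hb] by auto
  have aba: "a \<in> cyc_arc n b a" using cyc_arc_off[of b n a a] ha'(1) hb'(2) by simp
  have bba: "b \<in> cyc_arc n b a" using cyc_arc_off[of b n b a] ha'(1) hb'(2) by simp
  have av: "a \<noteq> v" using aba vb by auto
  have bv: "b \<noteq> v" using bba vb by auto
  have ua: "u \<noteq> a"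
  proof
    assume "u = a"
    then have "{v, a} = {a, a'}" using anb u(2) by simp
    then show False using va' av by (auto simp: doubleton_eq_iff)
  qed
  have ub: "u \<noteq> b"
  proof
    assume "u = b"
    then have "{v, b} = {b, b'}" using bnb u(2) by simp
    then show False using vb' bv by (auto simp: doubleton_eq_iff)
  qed
  have h6: "a' = b \<Longrightarrow> b' = a"
  proof -
    assume "a' = b"
    then have "{b, a} = {b, b'}" using bnb aB by (simp add: insert_commute)
    then show "b' = a" using ab by (auto simp: doubleton_eq_iff)
  qed
  have h7: "b' = a \<Longrightarrow> a' = b"
  proof -
    assume "b' = a"
    then have "{a, b} = {a, a'}" using anb bB by (simp add: insert_commute)
    then show "a' = b" using ab by (auto simp: doubleton_eq_iff)
  qed
  define D where "D = off n v"
  have rot: "\<And>x y. x < n \<Longrightarrow> y < n \<Longrightarrow> off n (D x) (D y) = off n x y"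
    unfolding D_def using vn by (simp add: off_rot)
  have Dlt: "\<And>x. x < n \<Longrightarrow> D x < n" unfolding D_def using vn by (simp add: off_lt)
  have D0: "\<And>x. x < n \<Longrightarrow> D x = 0 \<longleftrightarrow> x = v" unfolding D_def using vn by (auto simp: off_eq0)
  have Dinj: "\<And>x y. x < n \<Longrightarrow> y < n \<Longrightarrow> D x = D y \<longleftrightarrow> x = y" unfolding D_def using vn by (simp add: off_inj)
  have Dv: "D v = 0" unfolding D_def by simp
  have "(D a' = D a + 1 \<and> D u < D a) \<or> (D a' + 1 = D a \<and> D a < D u)
      \<or> (D b' = D b + 1 \<and> D u < D b) \<or> (D b' + 1 = D b \<and> D b < D u)"
  proof (rule arith_cases)
    show "D a < n" "D a' < n" "D b < n" "D b' < n" "D u < n" using Dlt ha' hb' un by auto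
    show "D a \<noteq> 0" "D a' \<noteq> 0" "D b \<noteq> 0" "D b' \<noteq> 0" "D u \<noteq> 0"
      using D0 ha' hb' un av bv va' vb' u(1) by auto
    show "D u \<noteq> D a" "D u \<noteq> D b" "D a \<noteq> D b"
      using Dinj ha' hb' un ua ub ab by auto
    show "off n (D a) (D a') = 1 \<or> off n (D a') (D a) = 1" using rot ha' by simp
    show "off n (D b') (D b) = 1 \<or> off n (D b) (D b') = 1" using rot hb' by simp
    show "off n (D a) (D a') \<le> off n (D a) (D b)"
      using rot ha' hb' al(1) cyc_arc_off[of a n a' b] by simp
    show "off n (D a) (D b') \<le> off n (D a) (D b)"
      using rot ha' hb' al(2) cyc_arc_off[of a n b' b] by simp
    have "\<not> off n b v \<le> off n b a" using vb cyc_arc_off[of b n v a] ha' hb' vn by simp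
    then show "\<not> off n (D b) 0 \<le> off n (D b) (D a)" using rot[of b v] rot[of b a] Dv ha' hb' vn by simp
    show "D a' = D b \<Longrightarrow> D b' = D a" using Dinj h6 ha' hb' by auto
    show "D b' = D a \<Longrightarrow> D a' = D b" using Dinj h7 ha' hb' by auto
  qed
  then show False
  proof (elim disjE conjE)
    assume x: "D a' = D a + 1" "D u < D a"
    show False
    proof (rule gen[OF bl vn ha'(1) av[symmetric] un ha'(2), of "D u" "D a - 1"])
      show "1 \<le> D u" "D a - 1 < n" "off n v a + 1 = D u \<or> off n v a = D a - 1 + 1"
        using x D0[OF un] u(1) Dlt[OF ha'(1)] unfolding D_def by auto
    qed (use u(3) anb ua x in \<open>auto simp: D_def\<close>)
  next
    assume x: "D a' + 1 = D a" "D a < D u"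
    show False
    proof (rule gen[OF bl vn ha'(1) av[symmetric] un ha'(2), of "D a + 1" "D u"])
      show "1 \<le> D a + 1" "D u < n" "off n v a + 1 = D a + 1 \<or> off n v a = D u + 1"
        using Dlt[OF un] unfolding D_def by auto
    qed (use u(3) anb ua x in \<open>auto simp: D_def\<close>)
  next
    assume x: "D b' = D b + 1" "D u < D b"
    show False
    proof (rule gen[OF bl vn hb'(2) bv[symmetric] un hb'(1), of "D u" "D b - 1"])
      show "1 \<le> D u" "D b - 1 < n" "off n v b + 1 = D u \<or> off n v b = D b - 1 + 1"
        using x D0[OF un] u(1) Dlt[OF hb'(2)] unfolding D_def by auto
    qed (use u(3) bnb ub x in \<open>auto simp: D_def\<close>)
  next
    assume x: "D b' + 1 = D b" "D b < D u"
    show False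
    proof (rule gen[OF bl vn hb'(2) bv[symmetric] un hb'(1), of "D b + 1" "D u"])
      show "1 \<le> D b + 1" "D u < n" "off n v b + 1 = D b + 1 \<or> off n v b = D u + 1"
        using Dlt[OF un] unfolding D_def by auto
    qed (use u(3) bnb ub x in \<open>auto simp: D_def\<close>)
  qed
qed

lemma arc_ends: "x < n \<Longrightarrow> z < n \<Longrightarrow> x \<in> cyc_arc n x z \<and> z \<in> cyc_arc n x z"
  using cyc_arc_off[of x n x z] cyc_arc_off[of x n z z] by simp

theorem claim1:
  fixes n :: nat and B :: "nat set set" and P :: "nat list" and \<alpha> \<beta> :: "nat set"
  assumes blocker: "is_blocker n B (simple_trees_diam n 3)"
    and not_star: "\<not> is_star n B"
    and cat: "caterpillar B"
    and spine: "is_spine B P"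
    and a_edge: "{P ! 0, P ! 1} \<in> hull_edges n"
    and b_edge: "{P ! (length P - 2), P ! (length P - 1)} \<in> hull_edges n"
    and a'b': "P ! 1 \<noteq> P ! (length P - 2)"
    and arcs: "(\<alpha> = cyc_arc n (P ! 0) (P ! (length P - 1)) \<and> \<beta> = cyc_arc n (P ! (length P - 1)) (P ! 0))
             \<or> (\<alpha> = cyc_arc n (P ! (length P - 1)) (P ! 0) \<and> \<beta> = cyc_arc n (P ! 0) (P ! (length P - 1)))"
    and alpha: "P ! 1 \<in> \<alpha>" "P ! (length P - 2) \<in> \<alpha>"
  shows "leaves B \<subseteq> \<beta>"
proof
  fix v assume vl: "v \<in> leaves B"
  show "v \<in> \<beta>"
  proof (rule ccontr)
    assume vb: "v \<notin> \<beta>"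
    have bl: "blocks n B (simple_trees_diam n 3)" using blocker unfolding is_blocker_def by simp
    have Bsub: "B \<subseteq> cvx_edges n" using bl unfolding blocks_def by simp
    have "cvx_edges n \<subseteq> Pow {..<n}" unfolding cvx_edges_def by auto
    then have finB: "finite B" using Bsub by (meson finite_Pow_iff finite_lessThan finite_subset)
    have tr: "is_tree (\<Union>B) B" using cat unfolding caterpillar_def by simp
    have c2: "\<forall>e\<in>B. card e = 2" and ncyc: "\<not> has_cycle B" using tr unfolding is_tree_def by auto
    obtain u where u: "u \<noteq> v" "{v, u} \<in> B" using leaf_nb[OF vl c2] by blast
    have gp: "gpath B P" and lng: "\<And>Q. gpath B Q \<Longrightarrow> length Q \<le> length P"
      using spine unfolding is_spine_def by auto
    have "gpath B [v, u]" using u unfolding gpath_def by (simp add: walk_Cons2)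
    then have L2: "2 \<le> length P" using lng by fastforce
    define L where "L = length P"
    have wk: "\<And>i. Suc i < L \<Longrightarrow> {P ! i, P ! Suc i} \<in> B"
      using gp unfolding gpath_def walk_def L_def by blast
    have dP: "distinct P" using gp unfolding gpath_def by simp
    have neq: "\<And>i j. i < L \<Longrightarrow> j < L \<Longrightarrow> i \<noteq> j \<Longrightarrow> P ! i \<noteq> P ! j"
      using dP unfolding L_def by (simp add: nth_eq_iff_index_eq)
    have anb: "\<forall>e\<in>B. P ! 0 \<in> e \<longrightarrow> e = {P ! 0, P ! 1}"
      using spine_end[OF ncyc c2 spine L2] by blast
    have aB: "{P ! 0, P ! 1} \<in> B" using wk[of 0] L2 unfolding L_def by simp
    have sr: "is_spine B (rev P)" using spine by (rule spine_rev)
    have r0: "rev P ! 0 = P ! (L - 1)" using L2 unfolding L_def by (subst rev_nth) auto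
    have r1: "rev P ! 1 = P ! (L - 2)" using L2 unfolding L_def by (subst rev_nth) (auto simp: numeral_2_eq_2)
    have bnb: "\<forall>e\<in>B. P ! (L - 1) \<in> e \<longrightarrow> e = {P ! (L - 1), P ! (L - 2)}"
      using spine_end[OF ncyc c2 sr] L2 r0 r1 unfolding L_def by simp
    have bB': "{P ! (L - 2), P ! (L - 1)} \<in> B"
    proof -
      have "Suc (L - 2) = L - 1" "L - 1 < L" using L2 unfolding L_def by auto
      then show ?thesis using wk[of "L - 2"] by simp
    qed
    have bB: "{P ! (L - 1), P ! (L - 2)} \<in> B" using bB' by (simp add: insert_commute)
    have ab: "P ! 0 \<noteq> P ! (L - 1)" using neq[of 0 "L - 1"] L2 unfolding L_def by fastforce
    have ha: "P ! 0 < n" "P ! 1 < n" using hull_off[OF a_edge] by auto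
    have hb: "P ! (L - 2) < n" "P ! (L - 1) < n" using hull_off[OF b_edge] unfolding L_def by auto
    have abeta: "P ! 0 \<in> \<beta>" "P ! (L - 1) \<in> \<beta>"
      using arcs arc_ends[OF ha(1) hb(2)] arc_ends[OF hb(2) ha(1)] unfolding L_def by auto
    have va'b': "v \<noteq> P ! 1 \<and> v \<noteq> P ! (L - 2)"
    proof (cases "L = 2")
      case True
      then have "P ! 1 = P ! (L - 1)" "P ! (L - 2) = P ! 0" by simp_all
      then show ?thesis using abeta vb by auto
    next
      case False
      then have L3: "3 \<le> L" using L2 unfolding L_def by simp
      have dv: "degree B v = 1" using vl unfolding leaves_def by (rule CollectD)
      have "degree B (P ! 1) \<noteq> 1"
      proof (rule degree_ge2[OF finB])
        show "{P ! 1, P ! 0} \<in> B" using aB by (simp add: insert_commute)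
        show "{P ! 1, P ! 2} \<in> B" using wk[of 1] L3 by (simp add: numeral_2_eq_2)
        show "P ! 0 \<noteq> P ! 2" using neq[of 0 2] L3 by simp
      qed
      moreover have "degree B (P ! (L - 2)) \<noteq> 1"
      proof (rule degree_ge2[OF finB])
        show "{P ! (L - 2), P ! (L - 1)} \<in> B" using bB' .
        have "Suc (L - 3) = L - 2" "L - 2 < L" using L3 by auto
        then have "{P ! (L - 3), P ! (L - 2)} \<in> B" using wk[of "L - 3"] by simp
        then show "{P ! (L - 2), P ! (L - 3)} \<in> B" by (simp add: insert_commute)
        show "P ! (L - 1) \<noteq> P ! (L - 3)" using neq[of "L - 1" "L - 3"] L3 by simp
      qed
      ultimately show ?thesis using dv by auto
    qed
    from arcs show False
    proof (elim disjE conjE)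
      assume al: "\<alpha> = cyc_arc n (P ! 0) (P ! (length P - 1))"
        and be: "\<beta> = cyc_arc n (P ! (length P - 1)) (P ! 0)"
      show False
      proof (rule main1[OF bl anb aB bnb bB a_edge])
        show "{P ! (L - 2), P ! (L - 1)} \<in> hull_edges n" using b_edge unfolding L_def .
        show "P ! 1 \<in> cyc_arc n (P ! 0) (P ! (L - 1))" "P ! (L - 2) \<in> cyc_arc n (P ! 0) (P ! (L - 1))"
          using alpha al unfolding L_def by auto
        show "v \<notin> cyc_arc n (P ! (L - 1)) (P ! 0)" using vb be unfolding L_def by simp
      qed (use ab vl va'b' c2 Bsub in auto)
    next
      assume al: "\<alpha> = cyc_arc n (P ! (length P - 1)) (P ! 0)"
        and be: "\<beta> = cyc_arc n (P ! 0) (P ! (length P - 1))"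
      have ab': "P ! (L - 1) \<noteq> P ! 0" using ab by simp
      have ha': "{P ! (L - 1), P ! (L - 2)} \<in> hull_edges n"
        using b_edge unfolding L_def by (simp add: insert_commute)
      have hb': "{P ! 1, P ! 0} \<in> hull_edges n" using a_edge by (simp add: insert_commute)
      show False
      proof (rule main1[OF bl bnb bB anb aB ha' hb'])
        show "P ! (L - 2) \<in> cyc_arc n (P ! (L - 1)) (P ! 0)" "P ! 1 \<in> cyc_arc n (P ! (L - 1)) (P ! 0)"
          using alpha al unfolding L_def by auto
        show "v \<notin> cyc_arc n (P ! 0) (P ! (L - 1))" using vb be unfolding L_def by simp
      qed (use ab' vl va'b' c2 Bsub in auto)
    qed
  qed
qed

end
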